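(* Let $\Psi_n$ be a discrete-time Markov chain on a measurable space $(X,\mathcal{B})$, let $X=G\cup B$ be a partition into measurable sets, and let $\mathfrak{C}\in\mathcal{B}$ with $\mathfrak{C}\subset G$. Let $T_0=0$ and $T_{n+1}=\inf\{k>T_n:\Psi_k\in G\}$, let $\hat\Psi_n=\Psi_{T_n}$ (the $G$-induced chain), $\tau_{\mathfrak{C}}=\inf\{n>0:\Psi_n\in\mathfrak{C}\}$ and $\hat\tau_{\mathfrak{C}}=\inf\{n>0:\hat\Psi_n\in\mathfrak{C}\}$. Assume: (i) there is a constant $\alpha>0$ and a function $\xi:X\to[1,\infty)$ with $\sup_{x\in G}\xi(x)\le\xi_1<\infty$ such that for every $n$ and $k$, $\mathbb{P}[T_{n+1}-T_n>k\mid\Psi_{T_n}]\le\xi(\Psi_{T_n})k^{-\alpha}$; (ii) there are a constant $\omega>0$ and a function $\eta:X\to(0,\infty)$ such that $\mathbb{P}_{\Psi_0}[\hat\tau_{\mathfrak{C}}>k]\le\eta(\Psi_0)e^{-\omega k}$ for all $k$. Then for any $\epsilon>0$ there is a constant $c$ such that $$\mathbb{P}_{\Psi_0}[\tau_{\mathfrak{C}}>n]\le c\,(\eta(\Psi_0)+\xi(\Psi_0))\,n^{-(\alpha-\epsilon)}$$ for every $\Psi_0\in X$ and all $n\ge1$.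
   Context: $\mathbb{P}_{x}$ denotes probability for the chain started at $\Psi_0=x$. *)

theory Defs
  imports "HOL-Probability.Probability" "HOL-Library.Extended_Nat"
begin

text \<open>For each starting point x, P x is the path law \<open>P_x\<close>: a probability measure on a
  sample space under which the process Psi starts at x almost surely and satisfies the
  Markov property with respect to its natural filtration.\<close>
definition markov_chain ::
  "'a measure \<Rightarrow> ('a \<Rightarrow> 'a measure) \<Rightarrow> ('a \<Rightarrow> 'w measure) \<Rightarrow> (nat \<Rightarrow> 'w \<Rightarrow> 'a) \<Rightarrow> bool" where
  "markov_chain M K P Psi \<longleftrightarrow>
     K \<in> measurable M (prob_algebra M) \<and>
     (\<forall>x\<in>space M.
        prob_space (P x) \<and>
        (\<forall>n. Psi n \<in> measurable (P x) M) \<and>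
        (AE \<omega> in P x. Psi 0 \<omega> = x) \<and>
        (\<forall>n. \<forall>E\<in>sets (sigma (space (P x))
                         {Psi i -` A \<inter> space (P x) | i A. i \<le> n \<and> A \<in> sets M}).
           \<forall>A\<in>sets M.
             emeasure (P x) (E \<inter> {\<omega>\<in>space (P x). Psi (Suc n) \<omega> \<in> A})
               = (\<integral>\<^sup>+ \<omega>\<in>E. emeasure (K (Psi n \<omega>)) A \<partial>P x)))"

fun visit_time :: "(nat \<Rightarrow> 'w \<Rightarrow> 'a) \<Rightarrow> 'a set \<Rightarrow> nat \<Rightarrow> 'w \<Rightarrow> enat" where
  "visit_time Psi G 0 \<omega> = 0"
| "visit_time Psi G (Suc n) \<omega> =
     Inf {enat k | k. visit_time Psi G n \<omega> < enat k \<and> Psi k \<omega> \<in> G}"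

text \<open>The G-induced chain hat Psi_n = Psi_{T_n} (meaningful only where T_n is finite).\<close>
definition induced_chain :: "(nat \<Rightarrow> 'w \<Rightarrow> 'a) \<Rightarrow> 'a set \<Rightarrow> nat \<Rightarrow> 'w \<Rightarrow> 'a" where
  "induced_chain Psi G n \<omega> = Psi (the_enat (visit_time Psi G n \<omega>)) \<omega>"

definition return_time :: "(nat \<Rightarrow> 'w \<Rightarrow> 'a) \<Rightarrow> 'a set \<Rightarrow> 'w \<Rightarrow> enat" where
  "return_time Psi C \<omega> = Inf {enat n | n. 0 < n \<and> Psi n \<omega> \<in> C}"

definition induced_return_time :: "(nat \<Rightarrow> 'w \<Rightarrow> 'a) \<Rightarrow> 'a set \<Rightarrow> 'a set \<Rightarrow> 'w \<Rightarrow> enat" where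
  "induced_return_time Psi G C \<omega> =
     Inf {enat n | n. 0 < n \<and> visit_time Psi G n \<omega> < \<infinity> \<and> induced_chain Psi G n \<omega> \<in> C}"

end

theory Submission
  imports Defs "HOL-Real_Asymp.Real_Asymp"
begin

lemma Inf_enat_le_iff: "(Inf {enat k |k. P k} \<le> enat t) = (\<exists>k\<le>t. P k)"
proof
  assume h: "Inf {enat k |k. P k} \<le> enat t"
  have ne: "{enat k |k. P k} \<noteq> {}" using h by (auto simp: Inf_enat_def split: if_splits)
  hence "Inf {enat k |k. P k} \<in> {enat k |k. P k}"
    unfolding Inf_enat_def by (auto intro: LeastI)
  then obtain k where "P k" "Inf {enat k |k. P k} = enat k" by auto
  thus "\<exists>k\<le>t. P k" using h by auto
next
  assume "\<exists>k\<le>t. P k"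
  then obtain k where "k \<le> t" "P k" by auto
  thus "Inf {enat k |k. P k} \<le> enat t" by (intro Inf_lower2[of "enat k"]) auto
qed

lemma Inf_enat_in: "Inf {enat k |k. P k} = enat t \<Longrightarrow> P t"
proof -
  assume h: "Inf {enat k |k. P k} = enat t"
  have ne: "{enat k |k. P k} \<noteq> {}" using h by (auto simp: Inf_enat_def split: if_splits)
  hence "Inf {enat k |k. P k} \<in> {enat k |k. P k}"
    unfolding Inf_enat_def by (auto intro: LeastI)
  thus "P t" using h by auto
qed

lemma enat_lt_Suc: "((x::enat) < enat (Suc s)) = (x \<le> enat s)" by (cases x) auto

lemma vt_le_meas:
  assumes Ps: "\<And>n. Psi n \<in> measurable N M" and G: "G \<in> sets M"
  shows "{w\<in>space N. visit_time Psi G j w \<le> enat t} \<in> sets N"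
proof (induction j arbitrary: t)
  case 0 then show ?case by simp
next
  case (Suc j)
  have lt: "{w\<in>space N. visit_time Psi G j w < enat s} \<in> sets N" for s
  proof (cases s)
    case 0 then show ?thesis by (simp add: enat_0)
  next
    case (Suc s')
    have "{w\<in>space N. visit_time Psi G j w < enat s} = {w\<in>space N. visit_time Psi G j w \<le> enat s'}"
      using Suc by (auto simp: enat_lt_Suc)
    then show ?thesis using Suc.IH by simp
  qed
  have "{w\<in>space N. visit_time Psi G (Suc j) w \<le> enat t}
     = (\<Union>s\<in>{..t}. {w\<in>space N. visit_time Psi G j w < enat s} \<inter> {w\<in>space N. Psi s w \<in> G})"
    by (auto simp: Inf_enat_le_iff)
  also have "\<dots> \<in> sets N"
  proof (intro sets.finite_UN ballI sets.Int lt)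
    fix s have "{w\<in>space N. Psi s w \<in> G} = Psi s -` G \<inter> space N" by auto
    then show "{w\<in>space N. Psi s w \<in> G} \<in> sets N" using measurable_sets[OF Ps G] by simp
  qed simp
  finally show ?case .
qed

lemma enat_eq_iff_aux: "((x::enat) = enat t) = (x \<le> enat t \<and> \<not>(t \<noteq> 0 \<and> x \<le> enat (t - 1)))"
  by (cases x) auto

lemma vt_meas:
  assumes Ps: "\<And>n. Psi n \<in> measurable N M" and G: "G \<in> sets M"
  shows "visit_time Psi G j \<in> measurable N (count_space UNIV)"
  unfolding measurable_count_space_eq2_countable
proof (intro conjI ballI)
  fix a :: enat
  show "visit_time Psi G j -` {a} \<inter> space N \<in> sets N"
  proof (cases a)
    case (enat t)
    have "visit_time Psi G j -` {enat t} \<inter> space N =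
      {w\<in>space N. visit_time Psi G j w \<le> enat t} - (if t = 0 then {} else {w\<in>space N. visit_time Psi G j w \<le> enat (t - 1)})"
      apply (rule set_eqI)
      subgoal for w using enat_eq_iff_aux[of "visit_time Psi G j w" t] by auto
      done
    then show ?thesis using vt_le_meas[OF Ps G] enat by auto
  next
    case infinity
    have "visit_time Psi G j -` {a} \<inter> space N =
      space N - (\<Union>t. {w\<in>space N. visit_time Psi G j w \<le> enat t})"
      using infinity by auto (metis enat_ord_code(3) not_enat_eq order_refl)
    then show ?thesis using vt_le_meas[OF Ps G] by auto
  qed
qed simp


lemma vt_bound:
  assumes "\<forall>j<m. visit_time Psi G j w < \<infinity> \<longrightarrow> visit_time Psi G (Suc j) w - visit_time Psi G j w \<le> enat k"
  shows "j \<le> m \<Longrightarrow> visit_time Psi G j w \<le> enat (j*k)"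
proof (induction j)
  case 0 then show ?case by simp
next
  case (Suc j)
  then have "visit_time Psi G j w \<le> enat (j*k)" by simp
  then obtain s where s: "visit_time Psi G j w = enat s" "s \<le> j*k"
    by (cases "visit_time Psi G j w") auto
  have d: "visit_time Psi G (Suc j) w - enat s \<le> enat k"
    using assms[rule_format, of j] Suc.prems s by (simp del: visit_time.simps)
  show ?case
  proof (cases "visit_time Psi G (Suc j) w")
    case (enat u)
    with d s show ?thesis by auto
  next
    case infinity
    with d show ?thesis by simp
  qed
qed

lemma vt_Suc_pos:
  assumes "visit_time Psi G (Suc j) w = enat t" shows "0 < t \<and> Psi t w \<in> G"
proof -
  have "visit_time Psi G j w < enat t \<and> Psi t w \<in> G"
    using Inf_enat_in[of "\<lambda>k. visit_time Psi G j w < enat k \<and> Psi k w \<in> G" t] assms by simp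
  then show ?thesis by (metis gr_zeroI not_less_zero zero_enat_def enat_ord_simps(2) le_zero_eq zero_le not_le)
qed

lemma cover:
  assumes "return_time Psi C w > enat n" "m*k \<le> n"
  shows "induced_return_time Psi G C w > enat m \<or>
    (\<exists>j<m. visit_time Psi G j w < \<infinity> \<and> visit_time Psi G (Suc j) w - visit_time Psi G j w > enat k)"
proof (rule ccontr)
  assume "\<not> ?thesis"
  then have h1: "induced_return_time Psi G C w \<le> enat m"
    and h2: "\<forall>j<m. visit_time Psi G j w < \<infinity> \<longrightarrow> visit_time Psi G (Suc j) w - visit_time Psi G j w \<le> enat k"
    using not_less by blast+
  from h1 obtain i where i: "i \<le> m" "0 < i" "visit_time Psi G i w < \<infinity>" "induced_chain Psi G i w \<in> C"
    unfolding induced_return_time_def Inf_enat_le_iff by blast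
  have "visit_time Psi G i w \<le> enat (i*k)" using vt_bound[OF h2 i(1)] .
  also have "i*k \<le> n" using i(1) assms(2) by (meson le_trans mult_le_mono1)
  finally have le: "visit_time Psi G i w \<le> enat n" by simp
  obtain i' where i': "i = Suc i'" using i(2) gr0_implies_Suc by blast
  obtain t where t: "visit_time Psi G i w = enat t" using i(3) by (cases "visit_time Psi G i w") auto
  have tp: "0 < t" using vt_Suc_pos[of Psi G i' w t] t i' by simp
  have "Psi t w \<in> C" using i(4) t by (simp add: induced_chain_def)
  moreover have "t \<le> n" using le t by simp
  ultimately have "return_time Psi C w \<le> enat n"
    unfolding return_time_def Inf_enat_le_iff using tp by blast
  with assms(1) show False by simp
qed

lemma asym_bound:
  fixes a al e :: real assumes "a > 0" "al > 0" "e > 0"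
  shows "\<exists>N0. \<forall>x\<ge>N0. (a * ln x + 2) powr (1+al) \<le> x powr e \<and> 2 * (a * ln x + 2) \<le> x"
proof -
  have "eventually (\<lambda>x. (a * ln x + 2) powr (1+al) \<le> x powr e) at_top"
    using assms by real_asymp
  moreover have "eventually (\<lambda>x. 2 * (a * ln x + 2) \<le> x) at_top"
    using assms by real_asymp
  ultimately have "eventually (\<lambda>x. (a * ln x + 2) powr (1+al) \<le> x powr e \<and> 2 * (a * ln x + 2) \<le> x) at_top"
    by (rule eventually_conj)
  then show ?thesis by (simp add: eventually_at_top_linorder)
qed

theorem theorem3p6:
  fixes M :: "'a measure" and K :: "'a \<Rightarrow> 'a measure"
    and P :: "'a \<Rightarrow> 'w measure" and Psi :: "nat \<Rightarrow> 'w \<Rightarrow> 'a"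
    and G B C :: "'a set" and \<alpha> \<omega> :: real
    and \<xi> \<eta> :: "'a \<Rightarrow> real" and \<xi>1 :: real
  assumes mc: "markov_chain M K P Psi"
    and G: "G \<in> sets M" and B: "B \<in> sets M"
    and part: "G \<union> B = space M" "G \<inter> B = {}"
    and C: "C \<in> sets M" "C \<subseteq> G"
    and alpha: "\<alpha> > 0"
    and xi_ge: "\<forall>x\<in>space M. \<xi> x \<ge> 1"
    and xi_sup: "\<forall>x\<in>G. \<xi> x \<le> \<xi>1"
    and tail: "\<forall>x\<in>space M. \<forall>n. \<forall>k::nat. k \<ge> 1 \<longrightarrow> (\<forall>A\<in>sets M.
        emeasure (P x) {w\<in>space (P x). visit_time Psi G n w < \<infinity> \<and>
            induced_chain Psi G n w \<in> A \<and>
            visit_time Psi G (Suc n) w - visit_time Psi G n w > enat k}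
        \<le> (\<integral>\<^sup>+ w\<in>{w\<in>space (P x). visit_time Psi G n w < \<infinity> \<and> induced_chain Psi G n w \<in> A}.
               ennreal (\<xi> (induced_chain Psi G n w) * real k powr (-\<alpha>)) \<partial>P x))"
    and omega: "\<omega> > 0"
    and eta_pos: "\<forall>x\<in>space M. \<eta> x > 0"
    and induced_tail: "\<forall>x\<in>space M. \<forall>k::nat.
        measure (P x) {w\<in>space (P x). induced_return_time Psi G C w > enat k}
          \<le> \<eta> x * exp (- \<omega> * real k)"
  shows "\<forall>\<epsilon>>0. \<exists>c::real. \<forall>x\<in>space M. \<forall>n::nat. n \<ge> 1 \<longrightarrow>
           measure (P x) {w\<in>space (P x). return_time Psi C w > enat n}
             \<le> c * (\<eta> x + \<xi> x) * real n powr (-(\<alpha> - \<epsilon>))"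
proof (intro allI impI)
  fix \<epsilon> :: real assume eps: "\<epsilon> > 0"
  define \<beta> where "\<beta> = \<alpha> - \<epsilon>"
  define a where "a = \<alpha> / \<omega>"
  define \<xi>1p where "\<xi>1p = max \<xi>1 0"
  have a: "a > 0" using alpha omega by (simp add: a_def)
  have xi1p: "\<xi>1p \<ge> 0" by (simp add: \<xi>1p_def)
  obtain N0 where N0: "\<forall>x\<ge>N0. (a * ln x + 2) powr (1+\<alpha>) \<le> x powr \<epsilon> \<and> 2 * (a * ln x + 2) \<le> x"
    using asym_bound[OF a alpha eps] by blast
  define N :: nat where "N = max 1 (nat \<lceil>N0\<rceil>)"
  define c where "c = max (real N powr \<bar>\<beta>\<bar>) (1 + (1+\<xi>1p) * 2 powr \<alpha>)"
  show "\<exists>c::real. \<forall>x\<in>space M. \<forall>n::nat. n \<ge> 1 \<longrightarrow>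
           measure (P x) {w\<in>space (P x). return_time Psi C w > enat n}
             \<le> c * (\<eta> x + \<xi> x) * real n powr (-(\<alpha> - \<epsilon>))"
  proof (intro exI[of _ c] ballI allI impI)
    fix x and n :: nat assume x: "x \<in> space M" and n1: "1 \<le> n"
    have etax: "\<eta> x > 0" using eta_pos x by auto
    have xix: "\<xi> x \<ge> 1" using xi_ge x by auto
    have ps: "prob_space (P x)" and Ps: "\<And>i. Psi i \<in> measurable (P x) M"
      and AE0: "AE w in P x. Psi 0 w = x"
      using mc x unfolding markov_chain_def by auto
    interpret p: prob_space "P x" by (rule ps)
    note [measurable] = vt_meas[OF Ps G] Ps C(1)
    define S where "S = {w\<in>space (P x). return_time Psi C w > enat n}"
    have npos: "real n > 0" using n1 by simp
    have c1: "c \<ge> 1 + (1+\<xi>1p) * 2 powr \<alpha>" by (simp add: c_def)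
    have "0 \<le> (1+\<xi>1p) * 2 powr \<alpha>" using xi1p by simp
    then have cpos: "c \<ge> 1" using c1 by linarith
    have ex1: "\<eta> x + \<xi> x \<ge> 1" using etax xix by simp
    show "measure (P x) S \<le> c * (\<eta> x + \<xi> x) * real n powr (-(\<alpha> - \<epsilon>))"
    proof (cases "n < N")
      case True
      have key: "1 \<le> real N powr \<bar>\<beta>\<bar> * real n powr (-\<beta>)"
      proof (cases "\<beta> \<ge> 0")
        case True
        have "real N powr (-\<beta>) \<le> real n powr (-\<beta>)"
          using True npos \<open>n < N\<close> by (intro powr_mono2') auto
        moreover have "real N powr \<beta> * real N powr (-\<beta>) = 1"
          using \<open>n < N\<close> by (simp add: powr_add[symmetric])
        ultimately show ?thesis using True
          by (metis abs_of_nonneg mult_left_mono powr_ge_zero)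
      next
        case False
        have "1 \<le> real n powr (-\<beta>)" using False n1 by (intro ge_one_powr_ge_zero) auto
        moreover have "1 \<le> real N powr \<bar>\<beta>\<bar>" using \<open>n < N\<close> by (intro ge_one_powr_ge_zero) auto
        ultimately show ?thesis by (metis mult_mono' mult_1 zero_le_one)
      qed
      have "measure (P x) S \<le> 1" by simp
      also have "1 \<le> c * real n powr (-\<beta>)"
      proof -
        have "real N powr \<bar>\<beta>\<bar> \<le> c" by (simp add: c_def)
        then have "real N powr \<bar>\<beta>\<bar> * real n powr (-\<beta>) \<le> c * real n powr (-\<beta>)"
          by (intro mult_right_mono) auto
        with key show ?thesis by linarith
      qed
      also have "\<dots> \<le> c * (\<eta> x + \<xi> x) * real n powr (-\<beta>)"
      proof -
        have "0 \<le> c * real n powr (-\<beta>)" using cpos by simp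
        then have "(c * real n powr (-\<beta>)) * 1 \<le> (c * real n powr (-\<beta>)) * (\<eta> x + \<xi> x)"
          using ex1 by (intro mult_left_mono) auto
        then show ?thesis by (simp add: algebra_simps)
      qed
      finally show ?thesis by (simp add: \<beta>_def)
    next
      case False
      have nN0: "real n \<ge> N0" using False unfolding N_def by linarith
      from N0 nN0 have A1: "(a * ln n + 2) powr (1+\<alpha>) \<le> real n powr \<epsilon>"
        and A2: "2 * (a * ln n + 2) \<le> real n" by auto
      define m where "m = nat \<lceil>a * ln n\<rceil> + 1"
      define k where "k = n div m"
      have lnn: "ln (real n) \<ge> 0" using n1 by simp
      have y0: "0 \<le> a * ln n" using a lnn by simp
      have cy: "real (nat \<lceil>a * ln n\<rceil>) = of_int \<lceil>a * ln n\<rceil>" using y0 by simp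
      have mle: "real m \<le> a * ln n + 2" unfolding m_def
        using cy ceiling_correct[of "a * ln n"] by linarith
      have mge: "a * ln n \<le> real m" unfolding m_def
        using cy ceiling_correct[of "a * ln n"] by linarith
      have m1: "m \<ge> 1" by (simp add: m_def)
      have "real (2 * m) \<le> real n" using A2 mle by simp
      then have m2n: "2 * m \<le> n" by (simp only: of_nat_le_iff)
      have k2: "k \<ge> 2" unfolding k_def using m2n m1
        by (metis div_le_mono nonzero_mult_div_cancel_right not_one_le_zero)
      have k1: "k \<ge> 1" using k2 by simp
      have mk: "m * k \<le> n" unfolding k_def by (simp add: times_div_less_eq_dividend)
      have nk: "n \<le> k * m + m" unfolding k_def
        by (metis add_le_mono1 div_mult_mod_eq le_add1 less_imp_le_nat mod_less_divisor m1 add_le_cancel_left le_add_same_cancel1 less_le_trans zero_less_one order_refl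
           nat_add_left_cancel_le)
      have kge: "real k \<ge> real n / (2 * real m)"
      proof -
        have "real n \<le> real k * m + m" using nk by (metis of_nat_add of_nat_le_iff of_nat_mult)
        also have "\<dots> \<le> 2 * real k * m"
        proof -
          have "1 * real m \<le> real k * real m" using k1 by (intro mult_right_mono) auto
          then show ?thesis by simp
        qed
        finally show ?thesis using m1 by (simp add: field_simps)
      qed
      define Tau where "Tau = {w\<in>space (P x). induced_return_time Psi G C w > enat m}"
      define E where "E j = {w\<in>space (P x). visit_time Psi G j w < \<infinity> \<and>
            induced_chain Psi G j w \<in> space M \<and>
            visit_time Psi G (Suc j) w - visit_time Psi G j w > enat k}" for j
      have Emeas: "E j \<in> sets (P x)" for j unfolding E_def induced_chain_def by measurable
      have "Tau = {w\<in>space (P x). \<not> (\<exists>i\<le>m. 0 < i \<and> visit_time Psi G i w < \<infinity> \<and> Psi (the_enat (visit_time Psi G i w)) w \<in> C)}"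
        unfolding Tau_def induced_return_time_def induced_chain_def
        by (simp only: not_le[symmetric] Inf_enat_le_iff)
      also have "\<dots> \<in> sets (P x)" by measurable
      finally have Taumeas: "Tau \<in> sets (P x)" .
      have cov: "S \<subseteq> Tau \<union> (\<Union>j\<in>{..<m}. E j)"
      proof
        fix w assume w: "w \<in> S"
        then have wsp: "w \<in> space (P x)" by (simp add: S_def)
        have "induced_chain Psi G j w \<in> space M" for j
          unfolding induced_chain_def using Ps wsp by (meson measurable_space)
        with cover[of n Psi C w m k G] w mk wsp show "w \<in> Tau \<union> (\<Union>j\<in>{..<m}. E j)"
          by (auto simp: S_def Tau_def E_def simp del: visit_time.simps)
      qed
      have Ebd: "measure (P x) (E j) \<le> (\<xi> x + \<xi>1p) * real k powr (-\<alpha>)" for j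
      proof -
        define F where "F = {w\<in>space (P x). visit_time Psi G j w < \<infinity> \<and> induced_chain Psi G j w \<in> space M}"
        have bnn: "(\<xi> x + \<xi>1p) * real k powr (-\<alpha>) \<ge> 0" using xix xi1p by simp
        have "emeasure (P x) (E j) \<le> (\<integral>\<^sup>+ w\<in>F. ennreal (\<xi> (induced_chain Psi G j w) * real k powr (-\<alpha>)) \<partial>P x)"
          using tail x k1 unfolding E_def F_def by blast
        also have "\<dots> \<le> (\<integral>\<^sup>+ w. ennreal ((\<xi> x + \<xi>1p) * real k powr (-\<alpha>)) \<partial>P x)"
        proof (rule nn_integral_mono_AE)
          show "AE w in P x. ennreal (\<xi> (induced_chain Psi G j w) * real k powr (-\<alpha>)) * indicator F w
              \<le> ennreal ((\<xi> x + \<xi>1p) * real k powr (-\<alpha>))"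
            using AE0
          proof eventually_elim
            case (elim w)
            show ?case
            proof (cases "w \<in> F")
              case False then show ?thesis by simp
            next
              case True
              have "\<xi> (induced_chain Psi G j w) \<le> \<xi> x + \<xi>1p"
              proof (cases j)
                case 0 then show ?thesis using elim xi1p by (simp add: induced_chain_def zero_enat_def)
              next
                case (Suc j')
                from True obtain t where t: "visit_time Psi G j w = enat t"
                  unfolding F_def by (cases "visit_time Psi G j w") auto
                have "Psi t w \<in> G" using vt_Suc_pos[of Psi G j' w t] t Suc by simp
                then have "\<xi> (Psi t w) \<le> \<xi>1" using xi_sup by auto
                then show ?thesis using t xix unfolding \<xi>1p_def induced_chain_def by simp
              qed
              then have "\<xi> (induced_chain Psi G j w) * real k powr (-\<alpha>) \<le> (\<xi> x + \<xi>1p) * real k powr (-\<alpha>)"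
                by (simp add: mult_right_mono)
              then show ?thesis using True by (simp add: ennreal_leI)
            qed
          qed
        qed
        also have "\<dots> = ennreal ((\<xi> x + \<xi>1p) * real k powr (-\<alpha>))"
          by (simp add: p.emeasure_space_1)
        finally have "ennreal (measure (P x) (E j)) \<le> ennreal ((\<xi> x + \<xi>1p) * real k powr (-\<alpha>))"
          by (simp add: p.emeasure_eq_measure)
        then show ?thesis using bnn by (simp add: ennreal_le_iff)
      qed
      have Taubd: "measure (P x) Tau \<le> \<eta> x * exp (- \<omega> * real m)"
        using induced_tail x unfolding Tau_def by blast
      have "measure (P x) S \<le> measure (P x) (Tau \<union> (\<Union>j\<in>{..<m}. E j))"
        using cov Taumeas Emeas by (intro p.finite_measure_mono) auto
      also have "\<dots> \<le> measure (P x) Tau + measure (P x) (\<Union>j\<in>{..<m}. E j)"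
        using Taumeas Emeas by (intro measure_Un_le) auto
      also have "measure (P x) (\<Union>j\<in>{..<m}. E j) \<le> (\<Sum>j\<in>{..<m}. measure (P x) (E j))"
        using Emeas by (intro p.finite_measure_subadditive_finite) auto
      also have "\<dots> \<le> real m * ((\<xi> x + \<xi>1p) * real k powr (-\<alpha>))"
        using sum_bounded_above[of "{..<m}" "\<lambda>j. measure (P x) (E j)", OF Ebd] by simp
      finally have main: "measure (P x) S \<le> \<eta> x * exp (- \<omega> * real m) + real m * ((\<xi> x + \<xi>1p) * real k powr (-\<alpha>))"
        using Taubd by linarith
      have e1: "exp (- \<omega> * real m) \<le> real n powr (-\<beta>)"
      proof -
        have "exp (- \<omega> * real m) \<le> exp (- \<alpha> * ln n)"
          using mge omega unfolding a_def by (simp add: field_simps)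
        also have "\<dots> = real n powr (-\<alpha>)" using npos by (simp add: powr_def)
        also have "\<dots> \<le> real n powr (-\<beta>)" using n1 eps by (intro powr_mono) (auto simp: \<beta>_def)
        finally show ?thesis .
      qed
      have kpos: "real k > 0" using k1 by simp
      have e2: "real k powr (-\<alpha>) \<le> (2 * real m) powr \<alpha> * real n powr (-\<alpha>)"
      proof -
        have "real k powr (-\<alpha>) \<le> (real n / (2 * real m)) powr (-\<alpha>)"
          using kge npos m1 alpha by (intro powr_mono2') auto
        also have "\<dots> = (2 * real m) powr \<alpha> * real n powr (-\<alpha>)"
          using npos m1 by (simp add: powr_divide powr_minus divide_simps)
        finally show ?thesis .
      qed
      have e3: "real m * (2 * real m) powr \<alpha> \<le> 2 powr \<alpha> * real n powr \<epsilon>"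
      proof -
        have "real m * (2 * real m) powr \<alpha> = 2 powr \<alpha> * real m powr (1 + \<alpha>)"
          using m1 by (simp add: powr_mult powr_add)
        also have "real m powr (1 + \<alpha>) \<le> (a * ln n + 2) powr (1+\<alpha>)"
          using mle m1 alpha by (intro powr_mono2) auto
        also have "\<dots> \<le> real n powr \<epsilon>" by (rule A1)
        finally show ?thesis by simp
      qed
      have e4: "real m * (\<xi> x + \<xi>1p) \<le> \<xi> x * (1 + \<xi>1p) * real m"
        using xix xi1p m1 by (simp add: algebra_simps mult_left_mono mult_right_mono)
      have "real m * ((\<xi> x + \<xi>1p) * real k powr (-\<alpha>)) \<le>
            \<xi> x * (1 + \<xi>1p) * real m * ((2 * real m) powr \<alpha> * real n powr (-\<alpha>))"
      proof -
        have "real m * ((\<xi> x + \<xi>1p) * real k powr (-\<alpha>)) = (real m * (\<xi> x + \<xi>1p)) * real k powr (-\<alpha>)"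
          by (simp add: algebra_simps)
        also have "\<dots> \<le> (\<xi> x * (1 + \<xi>1p) * real m) * ((2 * real m) powr \<alpha> * real n powr (-\<alpha>))"
          by (rule mult_mono[OF e4 e2]) (use xix xi1p in auto)
        finally show ?thesis .
      qed
      also have "\<dots> = \<xi> x * (1 + \<xi>1p) * (real m * (2 * real m) powr \<alpha>) * real n powr (-\<alpha>)"
        by (simp add: algebra_simps)
      also have "\<dots> \<le> \<xi> x * (1 + \<xi>1p) * (2 powr \<alpha> * real n powr \<epsilon>) * real n powr (-\<alpha>)"
        using e3 xix xi1p by (intro mult_right_mono mult_left_mono) auto
      also have "\<dots> = \<xi> x * ((1 + \<xi>1p) * 2 powr \<alpha>) * (real n powr \<epsilon> * real n powr (-\<alpha>))"
        by (simp add: algebra_simps)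
      also have "real n powr \<epsilon> * real n powr (-\<alpha>) = real n powr (-\<beta>)"
        unfolding \<beta>_def by (simp add: powr_add[symmetric])
      finally have t2: "real m * ((\<xi> x + \<xi>1p) * real k powr (-\<alpha>)) \<le> \<xi> x * ((1 + \<xi>1p) * 2 powr \<alpha>) * real n powr (-\<beta>)" .
      have t1: "\<eta> x * exp (- \<omega> * real m) \<le> \<eta> x * real n powr (-\<beta>)"
        using e1 etax by simp
      have "\<eta> x + \<xi> x * ((1 + \<xi>1p) * 2 powr \<alpha>) \<le> c * (\<eta> x + \<xi> x)"
      proof -
        have "\<eta> x \<le> c * \<eta> x" using cpos etax by simp
        moreover have "\<xi> x * ((1 + \<xi>1p) * 2 powr \<alpha>) \<le> c * \<xi> x"
        proof -
          have "(1 + \<xi>1p) * 2 powr \<alpha> \<le> c" using c1 by linarith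
          then have "\<xi> x * ((1 + \<xi>1p) * 2 powr \<alpha>) \<le> \<xi> x * c" using xix by (intro mult_left_mono) auto
          then show ?thesis by (simp add: mult.commute)
        qed
        ultimately show ?thesis by (simp add: algebra_simps)
      qed
      then have "(\<eta> x + \<xi> x * ((1 + \<xi>1p) * 2 powr \<alpha>)) * real n powr (-\<beta>) \<le> c * (\<eta> x + \<xi> x) * real n powr (-\<beta>)"
        by (intro mult_right_mono) auto
      with main t1 t2 show ?thesis by (simp add: \<beta>_def algebra_simps)
    qed
  qed
qed

end
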